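(* Let $n,m\ge 1$ and $N\ge 2$ be integers, let $h:\mathbb{R}^n\to\mathbb{R}^m$ be a function, let $R\in\mathbb{R}^{m\times m}$ be symmetric positive definite, and let $\bm{z}\in\mathbb{R}^m$. Let $\bm{x}_1^f,\dots,\bm{x}_N^f\in\mathbb{R}^n$ be a (fixed) forecast ensemble with mean $\bar{\bm{x}}^f=\frac1N\sum_i\bm{x}_i^f$ and anomaly matrix $A^f=[\bm{x}_1^f-\bar{\bm{x}}^f,\dots,\bm{x}_N^f-\bar{\bm{x}}^f]\in\mathbb{R}^{n\times N}$, and set $P^f=\frac{1}{N-1}A^f(A^f)^\top$. Let $\bm{z}_i^f=h(\bm{x}_i^f)$, $\bar{\bm{z}}^f=\frac1N\sum_i\bm{z}_i^f$, $\mathcal{Z}^f=[\bm{z}_1^f-\bar{\bm{z}}^f,\dots,\bm{z}_N^f-\bar{\bm{z}}^f]$, $P_{xz}^f=\frac{1}{N-1}A^f(\mathcal{Z}^f)^\top$, $S^f=\frac{1}{N-1}\mathcal{Z}^f(\mathcal{Z}^f)^\top+R$, $K=P_{xz}^f(S^f)^{-1}$, and $\bar{\bm{x}}^a=\bar{\bm{x}}^f+K(\bm{z}-\bar{\bm{z}}^f)$. Define the recentered ensemble $\bm{x}_i^{rc}=\bar{\bm{x}}^a+(\bm{x}_i^f-\bar{\bm{x}}^f)$, $\bm{z}_i^{rc}=h(\bm{x}_i^{rc})$, $\bar{\bm{z}}^{rc}=\frac1N\sum_i\bm{z}_i^{rc}$, $\mathcal{Z}^{rc}=[\bm{z}_1^{rc}-\bar{\bm{z}}^{rc},\dots,\bm{z}_N^{rc}-\bar{\bm{z}}^{rc}]$,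 $P_{xz}^{rc}=\frac{1}{N-1}A^f(\mathcal{Z}^{rc})^\top$, $S^{rc}=\frac{1}{N-1}\mathcal{Z}^{rc}(\mathcal{Z}^{rc})^\top+R$, and $$P^{a,rc}=P^f+KS^{rc}K^\top-K(P_{xz}^{rc})^\top-P_{xz}^{rc}K^\top .$$ Let $\bm{\eta}_1,\dots,\bm{\eta}_N$ be independent $\mathcal{N}(\bm{0},R)$ random vectors, define $\bm{x}_i^\star=\bm{x}_i^{rc}+K(\bm{z}+\bm{\eta}_i-\bm{z}_i^{rc})$, let $\bar{\bm{x}}^\star=\frac1N\sum_i\bm{x}_i^\star$, $A^\star=[\bm{x}_1^\star-\bar{\bm{x}}^\star,\dots,\bm{x}_N^\star-\bar{\bm{x}}^\star]$, the candidate analysis ensemble $\widetilde{X}^a=\bar{\bm{x}}^a\bm{1}^\top+A^\star$ (with $\bm{1}\in\mathbb{R}^N$ the all-ones vector), and $\widetilde{P}^{a,rc}=\frac{1}{N-1}A^\star(A^\star)^\top$. Assume the update is accepted, i.e. $\operatorname{tr}(P^{a,rc})\le\operatorname{tr}(P^f)$. Then $\frac1N\widetilde{X}^a\bm{1}=\bar{\bm{x}}^a$ exactly, and $\mathbb{E}[\widetilde{P}^{a,rc}]=P^{a,rc}$, where the expectation is over $\bm{\eta}_1,\dots,\bm{\eta}_N$ (with the forecast ensemble and $\bm{z}$ held fixed).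
   Context: This is the "recalibrated stochastic ensemble Kalman filter" analysis step for a measurement model $\bm{z}=h(\bm{x})+\bm{v}$, $\bm{v}\sim\mathcal{N}(\bm{0},R)$. All quantities other than the $\bm{\eta}_i$ are deterministic. *)

theory Defs
  imports "HOL-Analysis.Analysis" "HOL-Probability.Probability"
begin

(* Ensembles are indexed by a finite type 'N with N = CARD('N);
   state space R^n = real^'n, observation space R^m = real^'m. *)

definition ens_mean :: "('N::finite \<Rightarrow> real^'d) \<Rightarrow> real^'d" where
  "ens_mean X = (1 / real CARD('N)) *\<^sub>R (\<Sum>i\<in>UNIV. X i)"

definition anom :: "('N::finite \<Rightarrow> real^'d) \<Rightarrow> real^'N^'d" where
  "anom X = (\<chi> r i. (X i - ens_mean X) $ r)"

definition scov :: "real^'N::finite^'d \<Rightarrow> real^'N^'e \<Rightarrow> real^'e^'d" where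
  "scov A B = (1 / (real CARD('N) - 1)) *\<^sub>R (A ** transpose B)"

definition sym_posdef :: "real^'m^'m \<Rightarrow> bool" where
  "sym_posdef R \<longleftrightarrow> transpose R = R \<and> (\<forall>v. v \<noteq> 0 \<longrightarrow> v \<bullet> (R *v v) > 0)"

(* X is a Gaussian random vector N(0,R) on the probability space M (R positive definite):
   every nontrivial linear functional a.X is N(0, a^T R a) (Cramer-Wold definition). *)
definition gaussian_vec :: "'w measure \<Rightarrow> ('w \<Rightarrow> real^'m) \<Rightarrow> real^'m^'m \<Rightarrow> bool" where
  "gaussian_vec M X R \<longleftrightarrow> X \<in> borel_measurable M \<and>
     (\<forall>a. a \<noteq> 0 \<longrightarrow> distributed M lborel (\<lambda>w. a \<bullet> X w) (normal_density 0 (sqrt (a \<bullet> (R *v a)))))"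

definition Kgain :: "(real^'n \<Rightarrow> real^'m) \<Rightarrow> real^'m^'m \<Rightarrow> ('N::finite \<Rightarrow> real^'n) \<Rightarrow> real^'m^'n" where
  "Kgain h R xf = (let Zf = anom (\<lambda>i. h (xf i)) in
      scov (anom xf) Zf ** matrix_inv (scov Zf Zf + R))"

definition xa_mean :: "(real^'n \<Rightarrow> real^'m) \<Rightarrow> real^'m^'m \<Rightarrow> real^'m \<Rightarrow> ('N::finite \<Rightarrow> real^'n) \<Rightarrow> real^'n" where
  "xa_mean h R z xf = ens_mean xf + Kgain h R xf *v (z - ens_mean (\<lambda>i. h (xf i)))"

definition x_rc :: "(real^'n \<Rightarrow> real^'m) \<Rightarrow> real^'m^'m \<Rightarrow> real^'m \<Rightarrow> ('N::finite \<Rightarrow> real^'n) \<Rightarrow> 'N \<Rightarrow> real^'n" where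
  "x_rc h R z xf i = xa_mean h R z xf + (xf i - ens_mean xf)"

definition Pa_rc :: "(real^'n \<Rightarrow> real^'m) \<Rightarrow> real^'m^'m \<Rightarrow> real^'m \<Rightarrow> ('N::finite \<Rightarrow> real^'n) \<Rightarrow> real^'n^'n" where
  "Pa_rc h R z xf = (let Af = anom xf; K = Kgain h R xf;
        Zrc = anom (\<lambda>i. h (x_rc h R z xf i));
        Pxz = scov Af Zrc; Src = scov Zrc Zrc + R in
      scov Af Af + K ** Src ** transpose K - K ** transpose Pxz - Pxz ** transpose K)"

definition x_star :: "(real^'n \<Rightarrow> real^'m) \<Rightarrow> real^'m^'m \<Rightarrow> real^'m \<Rightarrow> ('N::finite \<Rightarrow> real^'n) \<Rightarrow> ('N \<Rightarrow> real^'m) \<Rightarrow> 'N \<Rightarrow> real^'n" where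
  "x_star h R z xf eta i = x_rc h R z xf i + Kgain h R xf *v (z + eta i - h (x_rc h R z xf i))"

definition Xa_tilde :: "(real^'n \<Rightarrow> real^'m) \<Rightarrow> real^'m^'m \<Rightarrow> real^'m \<Rightarrow> ('N::finite \<Rightarrow> real^'n) \<Rightarrow> ('N \<Rightarrow> real^'m) \<Rightarrow> real^'N^'n" where
  "Xa_tilde h R z xf eta = (\<chi> r i. (xa_mean h R z xf) $ r) + anom (x_star h R z xf eta)"

definition Pa_tilde :: "(real^'n \<Rightarrow> real^'m) \<Rightarrow> real^'m^'m \<Rightarrow> real^'m \<Rightarrow> ('N::finite \<Rightarrow> real^'n) \<Rightarrow> ('N \<Rightarrow> real^'m) \<Rightarrow> real^'n^'n" where
  "Pa_tilde h R z xf eta = scov (anom (x_star h R z xf eta)) (anom (x_star h R z xf eta))"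

end

theory Submission
  imports Defs
begin


lemma mat_expand:
  fixes A :: "real^'a^'b"
  shows "A = (\<Sum>r\<in>UNIV. \<Sum>s\<in>UNIV. (A$r$s) *\<^sub>R axis r (axis s 1))"
proof -
  have "(\<Sum>r\<in>UNIV. \<Sum>s\<in>UNIV. (A$r$s) *\<^sub>R axis r (axis s (1::real))) $ i $ j = A $ i $ j" for i j
  proof -
    have "(\<Sum>r\<in>UNIV. \<Sum>s\<in>UNIV. (A$r$s) *\<^sub>R axis r (axis s (1::real))) $ i $ j
      = (\<Sum>r\<in>UNIV. \<Sum>s\<in>UNIV. (A$r$s) * (axis r (axis s (1::real)) $ i $ j))"
      by (simp add: sum_component)
    also have "\<dots> = (\<Sum>r\<in>UNIV. \<Sum>s\<in>UNIV. (if r = i then (if s = j then A$r$s else 0) else 0))"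
      by (intro sum.cong refl) (auto simp: axis_def)
    also have "\<dots> = (\<Sum>r\<in>UNIV. if r = i then (\<Sum>s\<in>UNIV. if s = j then A$r$s else 0) else 0)"
      by (intro sum.cong refl) auto
    also have "\<dots> = A $ i $ j" by (simp add: sum.delta sum.delta')
    finally show ?thesis .
  qed
  then show ?thesis by (simp add: vec_eq_iff)
qed

lemma hbi_mat:
  fixes f :: "'w \<Rightarrow> real^'a^'b"
  assumes "\<And>r s. has_bochner_integral M (\<lambda>w. f w $ r $ s) (c $ r $ s)"
  shows "has_bochner_integral M f c"
proof -
  have "has_bochner_integral M (\<lambda>w. \<Sum>r\<in>UNIV. \<Sum>s\<in>UNIV. (f w$r$s) *\<^sub>R axis r (axis s 1))
     (\<Sum>r\<in>UNIV. \<Sum>s\<in>UNIV. (c$r$s) *\<^sub>R axis r (axis s (1::real)))"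
    by (intro has_bochner_integral_sum has_bochner_integral_scaleR_left assms)
  moreover have "f = (\<lambda>w. \<Sum>r\<in>UNIV. \<Sum>s\<in>UNIV. (f w$r$s) *\<^sub>R axis r (axis s 1))"
    by (rule ext, rule mat_expand)
  moreover have "c = (\<Sum>r\<in>UNIV. \<Sum>s\<in>UNIV. (c$r$s) *\<^sub>R axis r (axis s (1::real)))"
    by (rule mat_expand)
  ultimately show ?thesis by simp
qed

lemma gauss_lin:
  fixes X :: "'w \<Rightarrow> real^'m"
  assumes P: "prob_space M" and g: "gaussian_vec M X R" and R: "sym_posdef R" and a: "a \<noteq> 0"
  shows "has_bochner_integral M (\<lambda>w. a \<bullet> X w) 0"
    and "has_bochner_integral M (\<lambda>w. (a \<bullet> X w)^2) (a \<bullet> (R *v a))"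
proof -
  interpret prob_space M by (rule P)
  define \<sigma> where "\<sigma> = sqrt (a \<bullet> (R *v a))"
  have pos: "a \<bullet> (R *v a) > 0" using R a unfolding sym_posdef_def by auto
  then have s: "\<sigma> > 0" unfolding \<sigma>_def by simp
  have D: "distributed M lborel (\<lambda>w. a \<bullet> X w) (normal_density 0 \<sigma>)"
    using g a unfolding gaussian_vec_def \<sigma>_def by auto
  have i1: "integrable M (\<lambda>w. a \<bullet> X w)"
  proof -
    have "integrable lborel (\<lambda>x. normal_density 0 \<sigma> x * x)"
      using s by (rule integrable_normal_moment_nz_1)
    then show ?thesis using distributed_integrable[OF D, of "\<lambda>x. x"] by simp
  qed
  have i2: "integrable M (\<lambda>w. (a \<bullet> X w)^2)"
  proof -
    have "integrable lborel (\<lambda>x. normal_density 0 \<sigma> x * x^2)"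
      using integrable_normal_moment[of \<sigma> 0 2] s by (simp only: diff_zero)
    then show ?thesis using distributed_integrable[OF D, of "\<lambda>x. x^2"] by simp
  qed
  have e1: "expectation (\<lambda>w. a \<bullet> X w) = 0"
    using normal_distributed_expectation[OF s D] .
  have e2: "expectation (\<lambda>w. (a \<bullet> X w)^2) = a \<bullet> (R *v a)"
    using normal_distributed_variance[OF s D] e1 pos unfolding \<sigma>_def by simp
  show "has_bochner_integral M (\<lambda>w. a \<bullet> X w) 0"
    using i1 e1 by (metis has_bochner_integral_iff)
  show "has_bochner_integral M (\<lambda>w. (a \<bullet> X w)^2) (a \<bullet> (R *v a))"
    using i2 e2 by (metis has_bochner_integral_iff)
qed


lemma gauss_comp:
  fixes X :: "'w \<Rightarrow> real^'m"
  assumes P: "prob_space M" and g: "gaussian_vec M X R" and R: "sym_posdef R"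
  shows "has_bochner_integral M (\<lambda>w. X w $ k) 0"
    and "has_bochner_integral M (\<lambda>w. X w $ k * X w $ l) (R $ k $ l)"
proof -
  have ak: "axis k (1::real) \<noteq> 0" by (simp add: axis_eq_0_iff)
  have al: "axis l (1::real) \<noteq> 0" by (simp add: axis_eq_0_iff)
  have akl: "axis k (1::real) + axis l 1 \<noteq> 0"
    by (auto simp: vec_eq_iff axis_def intro!: exI[of _ k])
  have sym: "R $ l $ k = R $ k $ l"
  proof -
    have "transpose R $ k $ l = R $ l $ k" by (simp add: transpose_def)
    then show ?thesis using R unfolding sym_posdef_def by simp
  qed
  have ip: "axis k (1::real) \<bullet> v = v $ k" for k and v :: "real^'m"
    by (simp add: inner_axis')
  have q: "(axis i (1::real)) \<bullet> (R *v axis j 1) = R $ i $ j" for i j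
    by (simp add: ip matrix_vector_mult_basis column_def)
  have q2: "(R *v axis j (1::real)) $ i = R $ i $ j" for i j
    by (simp add: matrix_vector_mult_basis column_def)
  show "has_bochner_integral M (\<lambda>w. X w $ k) 0"
    using gauss_lin(1)[OF P g R ak] by (simp add: ip)
  have h1: "has_bochner_integral M (\<lambda>w. (X w $ k)^2) (R $ k $ k)"
    using gauss_lin(2)[OF P g R ak] by (simp add: ip q2)
  have h2: "has_bochner_integral M (\<lambda>w. (X w $ l)^2) (R $ l $ l)"
    using gauss_lin(2)[OF P g R al] by (simp add: ip q2)
  have h3: "has_bochner_integral M (\<lambda>w. (X w $ k + X w $ l)^2) (R$k$k + R$k$l + R$l$k + R$l$l)"
    using gauss_lin(2)[OF P g R akl] by (simp add: ip q2 inner_add_left inner_add_right matrix_vector_right_distrib add_ac)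
  have "has_bochner_integral M (\<lambda>w. ((X w $ k + X w $ l)^2 - (X w $ k)^2 - (X w $ l)^2) / 2)
      (((R$k$k + R$k$l + R$l$k + R$l$l) - R$k$k - R$l$l) / 2)"
    by (intro has_bochner_integral_divide_zero has_bochner_integral_diff h1 h2 h3)
  moreover have "(\<lambda>w. ((X w $ k + X w $ l)^2 - (X w $ k)^2 - (X w $ l)^2) / 2) = (\<lambda>w. X w $ k * X w $ l)"
    by (simp add: power2_eq_square algebra_simps)
  moreover have "((R$k$k + R$k$l + R$l$k + R$l$l) - R$k$k - R$l$l) / 2 = R$k$l"
    using sym by simp
  ultimately show "has_bochner_integral M (\<lambda>w. X w $ k * X w $ l) (R $ k $ l)" by simp
qed

lemma gauss_indep:
  fixes eta :: "'N \<Rightarrow> 'w \<Rightarrow> real^'m"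
  assumes P: "prob_space M" and g: "\<And>i. gaussian_vec M (eta i) R" and R: "sym_posdef R"
    and indep: "prob_space.indep_vars M (\<lambda>_. borel) eta UNIV"
  shows "has_bochner_integral M (\<lambda>w. eta i w $ k * eta j w $ l) (if i = j then R $ k $ l else 0)"
proof (cases "i = j")
  case True then show ?thesis using gauss_comp(2)[OF P g R] by simp
next
  case False
  interpret prob_space M by (rule P)
  define Y where "Y t w = eta t w $ (if t = i then k else l)" for t w
  have ind: "indep_vars (\<lambda>_. borel) Y {i, j}"
    unfolding Y_def
    by (rule indep_vars_compose2[where X=eta and M'="\<lambda>_. borel"])
       (auto intro: indep_vars_subset[OF indep])
  have ig: "integrable M (Y t)" for t
    using gauss_comp(1)[OF P g R, of t "if t = i then k else l"] unfolding Y_def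
    by (simp add: has_bochner_integral_iff)
  have ez: "integral\<^sup>L M (Y t) = 0" for t
    using gauss_comp(1)[OF P g R, of t "if t = i then k else l"] unfolding Y_def
    by (simp add: has_bochner_integral_iff)
  have "integrable M (\<lambda>w. \<Prod>t\<in>{i,j}. Y t w)"
    by (rule indep_vars_integrable) (use ind ig in auto)
  moreover have "integral\<^sup>L M (\<lambda>w. \<Prod>t\<in>{i,j}. Y t w) = 0"
    by (subst indep_vars_lebesgue_integral) (use ind ig ez False in auto)
  moreover have "(\<lambda>w. \<Prod>t\<in>{i,j}. Y t w) = (\<lambda>w. eta i w $ k * eta j w $ l)"
    using False by (simp add: Y_def)
  ultimately show ?thesis using False by (simp add: has_bochner_integral_iff)
qed



lemma anom_nth: "anom X $ r $ i = X i $ r - (\<Sum>j\<in>UNIV. X j $ r) / real CARD('N)"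
  for X :: "'N::finite \<Rightarrow> real^'d"
  by (simp add: anom_def ens_mean_def sum_component)

lemma mmul_nth: "(A ** B) $ r $ s = (\<Sum>k\<in>UNIV. A $ r $ k * B $ k $ s)"
  by (simp add: matrix_matrix_mult_def)

lemma mvec_nth: "(A *v v) $ r = (\<Sum>k\<in>UNIV. A $ r $ k * v $ k)"
  by (simp add: matrix_vector_mult_def)

lemma anom_lin:
  fixes a :: "real^'d" and b :: "'N::finite \<Rightarrow> real^'d" and K :: "real^'e^'d" and g :: "'N \<Rightarrow> real^'e"
  shows "anom (\<lambda>i. a + b i + K *v g i) = anom b + K ** anom g"
proof -
  have "anom (\<lambda>i. a + b i + K *v g i) $ r $ i = (anom b + K ** anom g) $ r $ i" for r i
  proof -
    have "(\<Sum>j\<in>UNIV. (a + b j + K *v g j) $ r) = real CARD('N) * a $ r + (\<Sum>j\<in>UNIV. b j $ r)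
        + (\<Sum>k\<in>UNIV. K $ r $ k * (\<Sum>j\<in>UNIV. g j $ k))"
    proof -
      have "(\<Sum>j\<in>UNIV. \<Sum>k\<in>UNIV. K $ r $ k * g j $ k) = (\<Sum>k\<in>UNIV. \<Sum>j\<in>UNIV. K $ r $ k * g j $ k)"
        by (rule sum.swap)
      then show ?thesis by (simp add: sum.distrib mvec_nth sum_distrib_left)
    qed
    moreover have "(\<Sum>k\<in>UNIV. K $ r $ k * (g i $ k - (\<Sum>j\<in>UNIV. g j $ k) / real CARD('N)))
       = (\<Sum>k\<in>UNIV. K $ r $ k * g i $ k) - (\<Sum>k\<in>UNIV. K $ r $ k * (\<Sum>j\<in>UNIV. g j $ k)) / real CARD('N)"
      by (simp add: right_diff_distrib sum_subtractf sum_divide_distrib[symmetric])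
    ultimately show ?thesis
      by (simp add: anom_nth mmul_nth mvec_nth add_divide_distrib)
  qed
  then show ?thesis by (simp add: vec_eq_iff)
qed



lemma hbi_const: assumes "prob_space M" shows "has_bochner_integral M (\<lambda>w. c) (c::real)"
proof -
  interpret prob_space M by (rule assms)
  show ?thesis by (simp add: has_bochner_integral_iff prob_space)
qed

lemma anom_eta_moments:
  fixes eta :: "'N::finite \<Rightarrow> 'w \<Rightarrow> real^'m"
  assumes P: "prob_space M" and g: "\<And>i. gaussian_vec M (eta i) R" and R: "sym_posdef R"
    and indep: "prob_space.indep_vars M (\<lambda>_. borel) eta UNIV"
  shows "has_bochner_integral M (\<lambda>w. anom (\<lambda>j. eta j w) $ k $ i) 0"
    and "has_bochner_integral M (\<lambda>w. anom (\<lambda>j. eta j w) $ k $ i * anom (\<lambda>j. eta j w) $ l $ i)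
          ((real CARD('N) - 1) / real CARD('N) * R$k$l)"
proof -
  define n where "n = real CARD('N)"
  have n0: "n > 0" unfolding n_def by simp
  have c1: "has_bochner_integral M (\<lambda>w. eta j w $ k) 0" for j k
    using gauss_comp(1)[OF P g R] .
  have c2: "has_bochner_integral M (\<lambda>w. eta j w $ k * eta j' w $ l) (if j = j' then R $ k $ l else 0)" for j j' k l
    using gauss_indep[OF P g R indep] .
  have "has_bochner_integral M (\<lambda>w. eta i w $ k - (\<Sum>j\<in>UNIV. eta j w $ k) / n) (0 - (\<Sum>j\<in>(UNIV::'N set). 0) / n)"
    by (intro has_bochner_integral_diff has_bochner_integral_divide_zero has_bochner_integral_sum c1)
  then show "has_bochner_integral M (\<lambda>w. anom (\<lambda>j. eta j w) $ k $ i) 0"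
    by (simp add: anom_nth n_def)
  have "has_bochner_integral M (\<lambda>w. eta i w $ k * eta i w $ l - (\<Sum>j\<in>UNIV. eta i w $ k * eta j w $ l) / n
       - (\<Sum>j\<in>UNIV. eta j w $ k * eta i w $ l) / n
       + (\<Sum>j\<in>UNIV. \<Sum>j'\<in>UNIV. eta j w $ k * eta j' w $ l) / (n * n))
     ((if i = i then R $ k $ l else 0) - (\<Sum>j\<in>UNIV. (if i = j then R $ k $ l else 0)) / n
       - (\<Sum>j\<in>UNIV. (if j = i then R $ k $ l else 0)) / n
       + (\<Sum>j\<in>UNIV. \<Sum>j'\<in>(UNIV::'N set). (if j = j' then R $ k $ l else 0)) / (n * n))"
    by (intro has_bochner_integral_add has_bochner_integral_diff has_bochner_integral_divide_zero
        has_bochner_integral_sum c2)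
  moreover have "(\<lambda>w. eta i w $ k * eta i w $ l - (\<Sum>j\<in>UNIV. eta i w $ k * eta j w $ l) / n
       - (\<Sum>j\<in>UNIV. eta j w $ k * eta i w $ l) / n
       + (\<Sum>j\<in>UNIV. \<Sum>j'\<in>UNIV. eta j w $ k * eta j' w $ l) / (n * n))
     = (\<lambda>w. anom (\<lambda>j. eta j w) $ k $ i * anom (\<lambda>j. eta j w) $ l $ i)"
  proof
    fix w
    define xi where "xi = eta i w $ k"
    define yi where "yi = eta i w $ l"
    define X where "X = (\<Sum>j\<in>UNIV. eta j w $ k)"
    define Y where "Y = (\<Sum>j\<in>UNIV. eta j w $ l)"
    have e1: "(\<Sum>j\<in>UNIV. eta i w $ k * eta j w $ l) = xi * Y"
      by (simp add: xi_def Y_def sum_distrib_left)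
    have e2: "(\<Sum>j\<in>UNIV. eta j w $ k * eta i w $ l) = X * yi"
      by (simp add: yi_def X_def sum_distrib_right)
    have e3: "(\<Sum>j\<in>UNIV. \<Sum>j'\<in>UNIV. eta j w $ k * eta j' w $ l) = X * Y"
      by (simp add: X_def Y_def sum_product)
    have "xi * yi - xi * Y / n - X * yi / n + X * Y / (n * n) = (xi - X / n) * (yi - Y / n)"
      using n0 by (simp add: field_simps)
    then show "eta i w $ k * eta i w $ l - (\<Sum>j\<in>UNIV. eta i w $ k * eta j w $ l) / n
       - (\<Sum>j\<in>UNIV. eta j w $ k * eta i w $ l) / n
       + (\<Sum>j\<in>UNIV. \<Sum>j'\<in>UNIV. eta j w $ k * eta j' w $ l) / (n * n)
       = anom (\<lambda>j. eta j w) $ k $ i * anom (\<lambda>j. eta j w) $ l $ i"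
      unfolding e1 e2 e3 by (simp add: anom_nth n_def xi_def yi_def X_def Y_def)
  qed
  moreover have "((if i = i then R $ k $ l else 0) - (\<Sum>j\<in>UNIV. (if i = j then R $ k $ l else 0)) / n
       - (\<Sum>j\<in>UNIV. (if j = i then R $ k $ l else 0)) / n
       + (\<Sum>j\<in>UNIV. \<Sum>j'\<in>(UNIV::'N set). (if j = j' then R $ k $ l else 0)) / (n * n))
      = (n - 1) / n * R$k$l"
    using n0 by (simp add: n_def[symmetric] field_simps)
  ultimately show "has_bochner_integral M (\<lambda>w. anom (\<lambda>j. eta j w) $ k $ i * anom (\<lambda>j. eta j w) $ l $ i)
          ((real CARD('N) - 1) / real CARD('N) * R$k$l)"
    by (simp add: n_def)
qed



lemma mm_rdistrib: "((A::real^'b^'a) + B) ** (C::real^'c^'b) = A ** C + B ** C"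
  by (simp add: vec_eq_iff matrix_matrix_mult_def sum.distrib ring_distribs)
lemma mm_ldiff: "(A::real^'b^'a) ** ((B::real^'c^'b) - C) = A ** B - A ** C"
  by (simp add: vec_eq_iff matrix_matrix_mult_def sum_subtractf ring_distribs)
lemma mm_rdiff: "((A::real^'b^'a) - B) ** (C::real^'c^'b) = A ** C - B ** C"
  by (simp add: vec_eq_iff matrix_matrix_mult_def sum_subtractf ring_distribs)
lemma mm_scaleR_left: "(c *\<^sub>R (A::real^'b^'a)) ** (B::real^'c^'b) = c *\<^sub>R (A ** B)"
  by (simp add: vec_eq_iff matrix_matrix_mult_def sum_distrib_left mult.assoc)
lemma mm_scaleR_right: "(A::real^'b^'a) ** (c *\<^sub>R (B::real^'c^'b)) = c *\<^sub>R (A ** B)"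
  by (simp add: vec_eq_iff matrix_matrix_mult_def sum_distrib_left mult_ac)
lemma mm_neg_left: "(- (A::real^'b^'a)) ** (B::real^'c^'b) = - (A ** B)"
  by (simp add: vec_eq_iff matrix_matrix_mult_def sum_negf)
lemma transpose_diff': "transpose ((A::real^'b^'a) - B) = transpose A - transpose B"
  by (simp add: vec_eq_iff transpose_def)

lemma pa_alg:
  fixes Af :: "real^'N^'n" and Z :: "real^'N^'m" and K :: "real^'m^'n" and R :: "real^'m^'m"
  defines "c \<equiv> 1 / (real CARD('N) - 1)"
  shows "c *\<^sub>R ((Af - K ** Z) ** transpose (Af - K ** Z)) + K ** R ** transpose K
     = c *\<^sub>R (Af ** transpose Af) + K ** (c *\<^sub>R (Z ** transpose Z) + R) ** transpose K
       - K ** transpose (c *\<^sub>R (Af ** transpose Z)) - c *\<^sub>R (Af ** transpose Z) ** transpose K"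
  by (simp add: transpose_diff' matrix_transpose_mul transpose_scalar mm_ldiff mm_rdiff
      matrix_add_ldistrib mm_rdistrib mm_scaleR_left mm_scaleR_right matrix_mul_assoc
      scaleR_diff_right scaleR_add_right algebra_simps)


lemma scov_nth: "scov A B $ r $ s = (1 / (real CARD('N) - 1)) * (\<Sum>i\<in>UNIV. A $ r $ i * B $ s $ i)"
  for A :: "real^'N::finite^'d" and B :: "real^'N^'e"
  by (simp add: scov_def matrix_matrix_mult_def transpose_def)

lemma anom_rowsum: "(\<Sum>i\<in>UNIV. anom X $ r $ i) = 0"
  for X :: "'N::finite \<Rightarrow> real^'d"
  by (simp add: anom_nth sum_subtractf)

lemma mvec_neg: "(- K) *v v = - (K *v v)" for K :: "real^'b^'a"
  by (simp add: vec_eq_iff mvec_nth sum_negf)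

lemma expand4: "(x + (\<Sum>k\<in>A. u k)) * (y + (\<Sum>l\<in>B. v l)) =
   x * y + (\<Sum>l\<in>B. x * v l) + (\<Sum>k\<in>A. y * u k) + (\<Sum>k\<in>A. \<Sum>l\<in>B. u k * v l)" for x y :: real
proof -
  have "(x + (\<Sum>k\<in>A. u k)) * (y + (\<Sum>l\<in>B. v l)) =
    x * y + x * (\<Sum>l\<in>B. v l) + y * (\<Sum>k\<in>A. u k) + (\<Sum>k\<in>A. u k) * (\<Sum>l\<in>B. v l)"
    by (simp add: algebra_simps)
  also have "\<dots> = x * y + (\<Sum>l\<in>B. x * v l) + (\<Sum>k\<in>A. y * u k) + (\<Sum>k\<in>A. \<Sum>l\<in>B. u k * v l)"
    by (subst sum_product) (simp only: sum_distrib_left)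
  finally show ?thesis .
qed

theorem proposition1:
  fixes h :: "real^'n \<Rightarrow> real^'m"
    and R :: "real^'m^'m"
    and z :: "real^'m"
    and xf :: "'N::finite \<Rightarrow> real^'n"
    and M :: "'w measure"
    and eta :: "'N \<Rightarrow> 'w \<Rightarrow> real^'m"
  assumes N2: "CARD('N) \<ge> 2"
    and R_spd: "sym_posdef R"
    and P: "prob_space M"
    and gauss: "\<And>i. gaussian_vec M (eta i) R"
    and indep: "prob_space.indep_vars M (\<lambda>_. borel) eta UNIV"
    and accepted: "trace (Pa_rc h R z xf) \<le> trace (scov (anom xf) (anom xf))"
  shows "(\<forall>w\<in>space M. (1 / real CARD('N)) *\<^sub>R (Xa_tilde h R z xf (\<lambda>i. eta i w) *v 1)
            = xa_mean h R z xf)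
     \<and> integrable M (\<lambda>w. Pa_tilde h R z xf (\<lambda>i. eta i w))
     \<and> integral\<^sup>L M (\<lambda>w. Pa_tilde h R z xf (\<lambda>i. eta i w)) = Pa_rc h R z xf"
proof -
  define K where "K = Kgain h R xf"
  define xrc where "xrc = x_rc h R z xf"
  define c where "c i = xrc i + K *v (z - h (xrc i))" for i
  define D where "D = anom c"
  define Z where "Z = anom (\<lambda>i. h (xrc i))"
  define n where "n = real CARD('N)"
  have n2: "n \<ge> 2" using N2 unfolding n_def by simp
  have xs: "x_star h R z xf e = (\<lambda>i. 0 + c i + K *v e i)" for e
    by (rule ext) (simp add: x_star_def c_def K_def xrc_def algebra_simps)
  have Aeq: "anom (x_star h R z xf e) = D + K ** anom e" for e
    using anom_lin[of 0 c K e] by (simp add: xs D_def)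
  have "c = (\<lambda>i. (xa_mean h R z xf - ens_mean xf + K *v z) + xf i + (- K) *v h (xrc i))"
    by (rule ext) (simp add: c_def xrc_def x_rc_def mvec_neg algebra_simps)
  then have Dform: "D = anom xf - K ** Z"
    using anom_lin[of "xa_mean h R z xf - ens_mean xf + K *v z" xf "- K" "\<lambda>i. h (xrc i)"]
    by (simp add: D_def Z_def mm_neg_left)
  have part1: "(1 / real CARD('N)) *\<^sub>R (Xa_tilde h R z xf e *v 1) = xa_mean h R z xf" for e
  proof -
    have "(Xa_tilde h R z xf e *v 1) $ r = n * xa_mean h R z xf $ r" for r
      using anom_rowsum[of "x_star h R z xf e" r]
      by (simp add: Xa_tilde_def mvec_nth sum.distrib n_def)
    then show ?thesis by (simp add: vec_eq_iff n_def)
  qed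
  have entry: "has_bochner_integral M (\<lambda>w. Pa_tilde h R z xf (\<lambda>i. eta i w) $ r $ s)
      ((scov D D + K ** R ** transpose K) $ r $ s)" for r s
  proof -
    define a where "a k i w = anom (\<lambda>j. eta j w) $ k $ i" for k i w
    have m1: "has_bochner_integral M (a k i) 0" for k i
      unfolding a_def using anom_eta_moments(1)[OF P gauss R_spd indep] .
    have m2: "has_bochner_integral M (\<lambda>w. a k i w * a l i w) ((n - 1) / n * R$k$l)" for k l i
      unfolding a_def n_def using anom_eta_moments(2)[OF P gauss R_spd indep] .
    have feq: "(\<lambda>w. Pa_tilde h R z xf (\<lambda>i. eta i w) $ r $ s) = (\<lambda>w. (1 / (n - 1)) *
       (\<Sum>i\<in>UNIV. D$r$i * D$s$i + (\<Sum>l\<in>UNIV. D$r$i * (K$s$l * a l i w))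
         + (\<Sum>k\<in>UNIV. D$s$i * (K$r$k * a k i w))
         + (\<Sum>k\<in>UNIV. \<Sum>l\<in>UNIV. (K$r$k * K$s$l) * (a k i w * a l i w))))"
    proof
      fix w
      have "(D$r$i + (\<Sum>k\<in>UNIV. K$r$k * a k i w)) * (D$s$i + (\<Sum>l\<in>UNIV. K$s$l * a l i w))
        = D$r$i * D$s$i + (\<Sum>l\<in>UNIV. D$r$i * (K$s$l * a l i w))
         + (\<Sum>k\<in>UNIV. D$s$i * (K$r$k * a k i w))
         + (\<Sum>k\<in>UNIV. \<Sum>l\<in>UNIV. (K$r$k * K$s$l) * (a k i w * a l i w))" for i
        by (simp add: expand4 mult_ac)
      then show "Pa_tilde h R z xf (\<lambda>i. eta i w) $ r $ s = (1 / (n - 1)) *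
       (\<Sum>i\<in>UNIV. D$r$i * D$s$i + (\<Sum>l\<in>UNIV. D$r$i * (K$s$l * a l i w))
         + (\<Sum>k\<in>UNIV. D$s$i * (K$r$k * a k i w))
         + (\<Sum>k\<in>UNIV. \<Sum>l\<in>UNIV. (K$r$k * K$s$l) * (a k i w * a l i w)))"
        by (simp add: Pa_tilde_def Aeq scov_nth mmul_nth a_def n_def)
    qed
    have hb: "has_bochner_integral M (\<lambda>w. (1 / (n - 1)) *
       (\<Sum>i\<in>UNIV. D$r$i * D$s$i + (\<Sum>l\<in>UNIV. D$r$i * (K$s$l * a l i w))
         + (\<Sum>k\<in>UNIV. D$s$i * (K$r$k * a k i w))
         + (\<Sum>k\<in>UNIV. \<Sum>l\<in>UNIV. (K$r$k * K$s$l) * (a k i w * a l i w))))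
       ((1 / (n - 1)) *
       (\<Sum>i\<in>UNIV. D$r$i * D$s$i + (\<Sum>l\<in>UNIV. D$r$i * (K$s$l * 0))
         + (\<Sum>k\<in>UNIV. D$s$i * (K$r$k * 0))
         + (\<Sum>k\<in>UNIV. \<Sum>l\<in>UNIV. (K$r$k * K$s$l) * ((n - 1) / n * R$k$l))))"
      by (intro has_bochner_integral_mult_right has_bochner_integral_sum has_bochner_integral_add
          hbi_const[OF P] m1 m2)
    define Q where "Q = (\<Sum>k\<in>UNIV. \<Sum>l\<in>UNIV. (K$r$k * K$s$l) * R$k$l)"
    have Qswap: "Q = (\<Sum>l\<in>UNIV. \<Sum>k\<in>UNIV. (K$r$k * K$s$l) * R$k$l)"
      unfolding Q_def by (rule sum.swap)
    have Qeq: "(\<Sum>k\<in>UNIV. \<Sum>l\<in>UNIV. (K$r$k * K$s$l) * ((n - 1) / n * R$k$l)) = (n - 1) / n * Q"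
      by (simp add: Q_def sum_distrib_left mult_ac)
    have "((1 / (n - 1)) *
       (\<Sum>i\<in>UNIV. D$r$i * D$s$i + (\<Sum>l\<in>UNIV. D$r$i * (K$s$l * 0))
         + (\<Sum>k\<in>UNIV. D$s$i * (K$r$k * 0))
         + (\<Sum>k\<in>UNIV. \<Sum>l\<in>UNIV. (K$r$k * K$s$l) * ((n - 1) / n * R$k$l))))
       = (1 / (n - 1)) * (\<Sum>i\<in>UNIV. D$r$i * D$s$i) + (1 / (n - 1)) * (n * ((n - 1) / n * Q))"
      unfolding Qeq by (simp add: sum.distrib n_def algebra_simps)
    also have "\<dots> = (1 / (n - 1)) * (\<Sum>i\<in>UNIV. D$r$i * D$s$i) + Q"
    proof -
      have "n * ((n - 1) / n * Q) = (n - 1) * Q" using n2 by simp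
      moreover have "(1 / (n - 1)) * ((n - 1) * Q) = Q" using n2 by simp
      ultimately show ?thesis by simp
    qed
    also have "\<dots> = (scov D D + K ** R ** transpose K) $ r $ s"
      using Qswap by (simp add: scov_nth n_def mmul_nth transpose_def sum_distrib_left sum_distrib_right mult_ac)
    finally show ?thesis using hb feq by simp
  qed
  have hbm: "has_bochner_integral M (\<lambda>w. Pa_tilde h R z xf (\<lambda>i. eta i w)) (scov D D + K ** R ** transpose K)"
    by (rule hbi_mat) (rule entry)
  have "scov D D + K ** R ** transpose K = Pa_rc h R z xf"
    unfolding Dform Pa_rc_def Let_def scov_def K_def Z_def xrc_def
    by (rule pa_alg)
  then have hbm': "has_bochner_integral M (\<lambda>w. Pa_tilde h R z xf (\<lambda>i. eta i w)) (Pa_rc h R z xf)"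
    using hbm by simp
  show ?thesis
    using part1 hbm' by (simp add: has_bochner_integral_iff)
qed

end
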